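(* Let $(A,B)$ be an imprecise copula and define sequences by $A^0=A$, $B^0=B$ and, for $n\ge0$, $B^{n+1}=(A^n)_M$, $A^{n+1}=(B^{n+1})_O$. Then: (a) $(A^n)$ is pointwise nondecreasing, $(B^n)$ is pointwise nonincreasing, and both converge uniformly on $[0,1]^2$; denote the limits $\breve A$ and $\breve B$. (b) For each $n\ge1$, $(A^n,B^n)$ is an imprecise copula with $A^{n-1}\le A^n\le B^n\le B^{n-1}$. (c) $(\breve A,\breve B)$ is an imprecise copula with $A^n\le\breve A\le\breve B\le B^n$ for all $n$, and $(\breve A)_M=\breve B$, $(\breve B)_O=\breve A$.
   Context: Quasi-copula: $Q:[0,1]^2\to\mathbb{R}$ grounded ($Q(x,0)=Q(0,y)=0$), with neutral element $1$ ($Q(x,1)=x,Q(1,y)=y$), with $V_Q(R)\ge0$ for each rectangle having a side on the boundary of $[0,1]^2$, where $V_Q([s_1,s_2]\times[t_1,t_2])=Q(s_1,t_1)+Q(s_2,t_2)-Q(s_2,t_1)-Q(s_1,t_2)$. Defects: $\mathcal{R}_\nearrow(\mathbf{x}),\mathcal{R}_\swarrow(\mathbf{x}),\mathcal{R}_\nwarrow(\mathbf{x}),\mathcal{R}_\searrow(\mathbf{x})$ are the sets of (possibly degenerate) rectangles in $[0,1]^2$ with $\mathbf{x}$ as southwest, northeast, southeast, northwest corner; $D^Q_\bullet(\mathbf{x})=\inf\{V_Q(R):R\in\mathcal{R}_\bullet(\mathbf{x})\}$; $D^Q_M=\min(D^Q_\nearrow,D^Q_\swarrow)$, $D^Q_O=\min(D^Q_\nwarrow,D^Q_\searrow)$;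 $Q_M=Q-D^Q_M$, $Q_O=Q+D^Q_O$. Imprecise copula: a pair $(A,B)$ of grounded functions with neutral element 1 satisfying, for all rectangles with SW, SE, NE, NW corners $\mathbf{a},\mathbf{b},\mathbf{c},\mathbf{d}$: $A(\mathbf{a})+B(\mathbf{c})-A(\mathbf{b})-A(\mathbf{d})\ge0$, $B(\mathbf{a})+A(\mathbf{c})-A(\mathbf{b})-A(\mathbf{d})\ge0$, $B(\mathbf{a})+B(\mathbf{c})-B(\mathbf{b})-A(\mathbf{d})\ge0$, $B(\mathbf{a})+B(\mathbf{c})-A(\mathbf{b})-B(\mathbf{d})\ge0$. *)

theory Defs
  imports "HOL-Analysis.Analysis"
begin

text \<open>Functions on the unit square are represented as functions on pairs of reals;
only their values on the unit square are relevant.\<close>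

type_synonym sqfun = "real \<times> real \<Rightarrow> real"

definition unit_sq :: "(real \<times> real) set" where
  "unit_sq = {0..1} \<times> {0..1}"

definition vol :: "sqfun \<Rightarrow> real \<Rightarrow> real \<Rightarrow> real \<Rightarrow> real \<Rightarrow> real" where
  "vol Q s1 s2 t1 t2 = Q (s1, t1) + Q (s2, t2) - Q (s2, t1) - Q (s1, t2)"

text \<open>Defects. x is the SW / NE / SE / NW corner of the (possibly degenerate) rectangle.\<close>
definition defect_NE :: "sqfun \<Rightarrow> real \<times> real \<Rightarrow> real" where
  "defect_NE Q x = Inf {vol Q (fst x) s2 (snd x) t2 | s2 t2.
      fst x \<le> s2 \<and> s2 \<le> 1 \<and> snd x \<le> t2 \<and> t2 \<le> 1}"

definition defect_SW :: "sqfun \<Rightarrow> real \<times> real \<Rightarrow> real" where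
  "defect_SW Q x = Inf {vol Q s1 (fst x) t1 (snd x) | s1 t1.
      0 \<le> s1 \<and> s1 \<le> fst x \<and> 0 \<le> t1 \<and> t1 \<le> snd x}"

definition defect_NW :: "sqfun \<Rightarrow> real \<times> real \<Rightarrow> real" where
  "defect_NW Q x = Inf {vol Q s1 (fst x) (snd x) t2 | s1 t2.
      0 \<le> s1 \<and> s1 \<le> fst x \<and> snd x \<le> t2 \<and> t2 \<le> 1}"

definition defect_SE :: "sqfun \<Rightarrow> real \<times> real \<Rightarrow> real" where
  "defect_SE Q x = Inf {vol Q (fst x) s2 t1 (snd x) | s2 t1.
      fst x \<le> s2 \<and> s2 \<le> 1 \<and> 0 \<le> t1 \<and> t1 \<le> snd x}"

definition defect_M :: "sqfun \<Rightarrow> real \<times> real \<Rightarrow> real" where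
  "defect_M Q x = min (defect_NE Q x) (defect_SW Q x)"

definition defect_O :: "sqfun \<Rightarrow> real \<times> real \<Rightarrow> real" where
  "defect_O Q x = min (defect_NW Q x) (defect_SE Q x)"

definition M_op :: "sqfun \<Rightarrow> sqfun" where
  "M_op Q x = Q x - defect_M Q x"

definition O_op :: "sqfun \<Rightarrow> sqfun" where
  "O_op Q x = Q x + defect_O Q x"

definition grounded :: "sqfun \<Rightarrow> bool" where
  "grounded Q \<longleftrightarrow> (\<forall>x\<in>{0..1}. Q (x, 0) = 0) \<and> (\<forall>y\<in>{0..1}. Q (0, y) = 0)"

definition neutral1 :: "sqfun \<Rightarrow> bool" where
  "neutral1 Q \<longleftrightarrow> (\<forall>x\<in>{0..1}. Q (x, 1) = x) \<and> (\<forall>y\<in>{0..1}. Q (1, y) = y)"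

text \<open>Imprecise copula; the rectangle [s1,s2] x [t1,t2] has corners
 a = (s1,t1) (SW), b = (s2,t1) (SE), c = (s2,t2) (NE), d = (s1,t2) (NW).\<close>
definition imprecise_copula :: "sqfun \<Rightarrow> sqfun \<Rightarrow> bool" where
  "imprecise_copula A B \<longleftrightarrow> grounded A \<and> grounded B \<and> neutral1 A \<and> neutral1 B \<and>
    (\<forall>s1 s2 t1 t2. 0 \<le> s1 \<and> s1 \<le> s2 \<and> s2 \<le> 1 \<and> 0 \<le> t1 \<and> t1 \<le> t2 \<and> t2 \<le> 1 \<longrightarrow>
      A (s1, t1) + B (s2, t2) - A (s2, t1) - A (s1, t2) \<ge> 0 \<and>
      B (s1, t1) + A (s2, t2) - A (s2, t1) - A (s1, t2) \<ge> 0 \<and>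
      B (s1, t1) + B (s2, t2) - B (s2, t1) - A (s1, t2) \<ge> 0 \<and>
      B (s1, t1) + B (s2, t2) - A (s2, t1) - B (s1, t2) \<ge> 0)"

primrec iterAB :: "sqfun \<Rightarrow> sqfun \<Rightarrow> nat \<Rightarrow> sqfun \<times> sqfun" where
  "iterAB A B 0 = (A, B)"
| "iterAB A B (Suc n) = (let B' = M_op (fst (iterAB A B n)) in (O_op B', B'))"

definition seqA :: "sqfun \<Rightarrow> sqfun \<Rightarrow> nat \<Rightarrow> sqfun" where
  "seqA A B n = fst (iterAB A B n)"

definition seqB :: "sqfun \<Rightarrow> sqfun \<Rightarrow> nat \<Rightarrow> sqfun" where
  "seqB A B n = snd (iterAB A B n)"

end

theory Submission
  imports Defs
begin


definition I01 :: "real \<Rightarrow> bool" where "I01 a \<longleftrightarrow> 0 \<le> a \<and> a \<le> 1"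
definition TT :: "sqfun \<Rightarrow> real \<Rightarrow> real \<Rightarrow> real \<Rightarrow> real \<Rightarrow> real" where
  "TT F x1 x2 p1 p2 = F (p1, x2) + F (x1, p2) - F (p1, p2)"
definition conc :: "real \<Rightarrow> real \<Rightarrow> real \<Rightarrow> real \<Rightarrow> bool" where
  "conc x1 x2 p1 p2 \<longleftrightarrow> (x1 \<le> p1 \<and> x2 \<le> p2) \<or> (p1 \<le> x1 \<and> p2 \<le> x2)"
definition disc :: "real \<Rightarrow> real \<Rightarrow> real \<Rightarrow> real \<Rightarrow> bool" where
  "disc x1 x2 p1 p2 \<longleftrightarrow> (x1 \<le> p1 \<and> p2 \<le> x2) \<or> (p1 \<le> x1 \<and> x2 \<le> p2)"

definition icM :: "sqfun \<Rightarrow> sqfun \<Rightarrow> bool" where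
  "icM A B \<longleftrightarrow> (\<forall>x1 x2 p1 p2. I01 x1 \<longrightarrow> I01 x2 \<longrightarrow> I01 p1 \<longrightarrow> I01 p2 \<longrightarrow>
      conc x1 x2 p1 p2 \<longrightarrow> TT A x1 x2 p1 p2 \<le> B (x1, x2))"
definition icO :: "sqfun \<Rightarrow> sqfun \<Rightarrow> bool" where
  "icO A B \<longleftrightarrow> (\<forall>x1 x2 p1 p2. I01 x1 \<longrightarrow> I01 x2 \<longrightarrow> I01 p1 \<longrightarrow> I01 p2 \<longrightarrow>
      disc x1 x2 p1 p2 \<longrightarrow> A (x1, x2) \<le> TT B x1 x2 p1 p2)"

lemma mem_sq: "(a, b) \<in> unit_sq \<longleftrightarrow> I01 a \<and> I01 b"
  by (auto simp: unit_sq_def I01_def)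

lemma vol_NE: "vol Q x1 s2 x2 t2 = Q (x1,x2) - TT Q x1 x2 s2 t2" by (simp add: vol_def TT_def)
lemma vol_SW: "vol Q s1 x1 t1 x2 = Q (x1,x2) - TT Q x1 x2 s1 t1" by (simp add: vol_def TT_def)
lemma vol_NW: "vol Q s1 x1 x2 t2 = TT Q x1 x2 s1 t2 - Q (x1,x2)" by (simp add: vol_def TT_def)
lemma vol_SE: "vol Q x1 s2 t1 x2 = TT Q x1 x2 s2 t1 - Q (x1,x2)" by (simp add: vol_def TT_def)

lemma M1:
  assumes x: "I01 x1" "I01 x2" and p: "I01 p1" "I01 p2" and c: "conc x1 x2 p1 p2"
  and bnd: "\<And>q1 q2. I01 q1 \<Longrightarrow> I01 q2 \<Longrightarrow> conc x1 x2 q1 q2 \<Longrightarrow> TT Q x1 x2 q1 q2 \<le> b"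
  shows "TT Q x1 x2 p1 p2 \<le> M_op Q (x1,x2)"
proof -
  let ?S1 = "{vol Q x1 s2 x2 t2 | s2 t2. x1 \<le> s2 \<and> s2 \<le> 1 \<and> x2 \<le> t2 \<and> t2 \<le> 1}"
  let ?S2 = "{vol Q s1 x1 t1 x2 | s1 t1. 0 \<le> s1 \<and> s1 \<le> x1 \<and> 0 \<le> t1 \<and> t1 \<le> x2}"
  have d: "M_op Q (x1,x2) = Q (x1,x2) - min (Inf ?S1) (Inf ?S2)"
    by (simp add: M_op_def defect_M_def defect_NE_def defect_SW_def)
  have b1: "bdd_below ?S1"
  proof (rule bdd_belowI[of _ "Q (x1,x2) - b"])
    fix v assume "v \<in> ?S1"
    then obtain s2 t2 where v: "v = vol Q x1 s2 x2 t2" "x1 \<le> s2" "s2 \<le> 1" "x2 \<le> t2" "t2 \<le> 1" by blast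
    have "TT Q x1 x2 s2 t2 \<le> b" using bnd x v by (auto simp: I01_def conc_def)
    then show "Q (x1,x2) - b \<le> v" using v by (simp add: vol_NE)
  qed
  have b2: "bdd_below ?S2"
  proof (rule bdd_belowI[of _ "Q (x1,x2) - b"])
    fix v assume "v \<in> ?S2"
    then obtain s1 t1 where v: "v = vol Q s1 x1 t1 x2" "0 \<le> s1" "s1 \<le> x1" "0 \<le> t1" "t1 \<le> x2" by blast
    have "TT Q x1 x2 s1 t1 \<le> b" using bnd x v by (auto simp: I01_def conc_def)
    then show "Q (x1,x2) - b \<le> v" using v by (simp add: vol_SW)
  qed
  from c show ?thesis unfolding conc_def
  proof
    assume h: "x1 \<le> p1 \<and> x2 \<le> p2"
    then have "vol Q x1 p1 x2 p2 \<in> ?S1" using p by (auto simp: I01_def)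
    then have "Inf ?S1 \<le> vol Q x1 p1 x2 p2" by (rule cInf_lower[OF _ b1])
    then show ?thesis using d by (simp add: vol_NE)
  next
    assume h: "p1 \<le> x1 \<and> p2 \<le> x2"
    then have "vol Q p1 x1 p2 x2 \<in> ?S2" using p by (auto simp: I01_def)
    then have "Inf ?S2 \<le> vol Q p1 x1 p2 x2" by (rule cInf_lower[OF _ b2])
    then show ?thesis using d by (simp add: vol_SW)
  qed
qed

lemma M2:
  assumes x: "I01 x1" "I01 x2"
  and bnd: "\<And>q1 q2. I01 q1 \<Longrightarrow> I01 q2 \<Longrightarrow> conc x1 x2 q1 q2 \<Longrightarrow> TT Q x1 x2 q1 q2 \<le> b"
  shows "M_op Q (x1,x2) \<le> b"
proof -
  let ?S1 = "{vol Q x1 s2 x2 t2 | s2 t2. x1 \<le> s2 \<and> s2 \<le> 1 \<and> x2 \<le> t2 \<and> t2 \<le> 1}"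
  let ?S2 = "{vol Q s1 x1 t1 x2 | s1 t1. 0 \<le> s1 \<and> s1 \<le> x1 \<and> 0 \<le> t1 \<and> t1 \<le> x2}"
  have d: "M_op Q (x1,x2) = Q (x1,x2) - min (Inf ?S1) (Inf ?S2)"
    by (simp add: M_op_def defect_M_def defect_NE_def defect_SW_def)
  have n1: "?S1 \<noteq> {}" using x by (auto simp: I01_def)
  have n2: "?S2 \<noteq> {}" using x by (auto simp: I01_def)
  have i1: "Q (x1,x2) - b \<le> Inf ?S1"
  proof (rule cInf_greatest[OF n1])
    fix v assume "v \<in> ?S1"
    then obtain s2 t2 where v: "v = vol Q x1 s2 x2 t2" "x1 \<le> s2" "s2 \<le> 1" "x2 \<le> t2" "t2 \<le> 1" by blast
    have "TT Q x1 x2 s2 t2 \<le> b" using bnd x v by (auto simp: I01_def conc_def)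
    then show "Q (x1,x2) - b \<le> v" using v by (simp add: vol_NE)
  qed
  have i2: "Q (x1,x2) - b \<le> Inf ?S2"
  proof (rule cInf_greatest[OF n2])
    fix v assume "v \<in> ?S2"
    then obtain s1 t1 where v: "v = vol Q s1 x1 t1 x2" "0 \<le> s1" "s1 \<le> x1" "0 \<le> t1" "t1 \<le> x2" by blast
    have "TT Q x1 x2 s1 t1 \<le> b" using bnd x v by (auto simp: I01_def conc_def)
    then show "Q (x1,x2) - b \<le> v" using v by (simp add: vol_SW)
  qed
  show ?thesis using d i1 i2 by linarith
qed

lemma O1:
  assumes x: "I01 x1" "I01 x2" and p: "I01 p1" "I01 p2" and c: "disc x1 x2 p1 p2"
  and bnd: "\<And>q1 q2. I01 q1 \<Longrightarrow> I01 q2 \<Longrightarrow> disc x1 x2 q1 q2 \<Longrightarrow> b \<le> TT Q x1 x2 q1 q2"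
  shows "O_op Q (x1,x2) \<le> TT Q x1 x2 p1 p2"
proof -
  let ?S1 = "{vol Q s1 x1 x2 t2 | s1 t2. 0 \<le> s1 \<and> s1 \<le> x1 \<and> x2 \<le> t2 \<and> t2 \<le> 1}"
  let ?S2 = "{vol Q x1 s2 t1 x2 | s2 t1. x1 \<le> s2 \<and> s2 \<le> 1 \<and> 0 \<le> t1 \<and> t1 \<le> x2}"
  have d: "O_op Q (x1,x2) = Q (x1,x2) + min (Inf ?S1) (Inf ?S2)"
    by (simp add: O_op_def defect_O_def defect_NW_def defect_SE_def)
  have b1: "bdd_below ?S1"
  proof (rule bdd_belowI[of _ "b - Q (x1,x2)"])
    fix v assume "v \<in> ?S1"
    then obtain s1 t2 where v: "v = vol Q s1 x1 x2 t2" "0 \<le> s1" "s1 \<le> x1" "x2 \<le> t2" "t2 \<le> 1" by blast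
    have "b \<le> TT Q x1 x2 s1 t2" using bnd x v by (auto simp: I01_def disc_def)
    then show "b - Q (x1,x2) \<le> v" using v by (simp add: vol_NW)
  qed
  have b2: "bdd_below ?S2"
  proof (rule bdd_belowI[of _ "b - Q (x1,x2)"])
    fix v assume "v \<in> ?S2"
    then obtain s2 t1 where v: "v = vol Q x1 s2 t1 x2" "x1 \<le> s2" "s2 \<le> 1" "0 \<le> t1" "t1 \<le> x2" by blast
    have "b \<le> TT Q x1 x2 s2 t1" using bnd x v by (auto simp: I01_def disc_def)
    then show "b - Q (x1,x2) \<le> v" using v by (simp add: vol_SE)
  qed
  from c show ?thesis unfolding disc_def
  proof
    assume h: "x1 \<le> p1 \<and> p2 \<le> x2"
    then have "vol Q x1 p1 p2 x2 \<in> ?S2" using p by (auto simp: I01_def)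
    then have "Inf ?S2 \<le> vol Q x1 p1 p2 x2" by (rule cInf_lower[OF _ b2])
    then show ?thesis using d by (simp add: vol_SE)
  next
    assume h: "p1 \<le> x1 \<and> x2 \<le> p2"
    then have "vol Q p1 x1 x2 p2 \<in> ?S1" using p by (auto simp: I01_def)
    then have "Inf ?S1 \<le> vol Q p1 x1 x2 p2" by (rule cInf_lower[OF _ b1])
    then show ?thesis using d by (simp add: vol_NW)
  qed
qed

lemma O2:
  assumes x: "I01 x1" "I01 x2"
  and bnd: "\<And>q1 q2. I01 q1 \<Longrightarrow> I01 q2 \<Longrightarrow> disc x1 x2 q1 q2 \<Longrightarrow> b \<le> TT Q x1 x2 q1 q2"
  shows "b \<le> O_op Q (x1,x2)"
proof -
  let ?S1 = "{vol Q s1 x1 x2 t2 | s1 t2. 0 \<le> s1 \<and> s1 \<le> x1 \<and> x2 \<le> t2 \<and> t2 \<le> 1}"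
  let ?S2 = "{vol Q x1 s2 t1 x2 | s2 t1. x1 \<le> s2 \<and> s2 \<le> 1 \<and> 0 \<le> t1 \<and> t1 \<le> x2}"
  have d: "O_op Q (x1,x2) = Q (x1,x2) + min (Inf ?S1) (Inf ?S2)"
    by (simp add: O_op_def defect_O_def defect_NW_def defect_SE_def)
  have n1: "?S1 \<noteq> {}" using x by (auto simp: I01_def)
  have n2: "?S2 \<noteq> {}" using x by (auto simp: I01_def)
  have i1: "b - Q (x1,x2) \<le> Inf ?S1"
  proof (rule cInf_greatest[OF n1])
    fix v assume "v \<in> ?S1"
    then obtain s1 t2 where v: "v = vol Q s1 x1 x2 t2" "0 \<le> s1" "s1 \<le> x1" "x2 \<le> t2" "t2 \<le> 1" by blast
    have "b \<le> TT Q x1 x2 s1 t2" using bnd x v by (auto simp: I01_def disc_def)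
    then show "b - Q (x1,x2) \<le> v" using v by (simp add: vol_NW)
  qed
  have i2: "b - Q (x1,x2) \<le> Inf ?S2"
  proof (rule cInf_greatest[OF n2])
    fix v assume "v \<in> ?S2"
    then obtain s2 t1 where v: "v = vol Q x1 s2 t1 x2" "x1 \<le> s2" "s2 \<le> 1" "0 \<le> t1" "t1 \<le> x2" by blast
    have "b \<le> TT Q x1 x2 s2 t1" using bnd x v by (auto simp: I01_def disc_def)
    then show "b - Q (x1,x2) \<le> v" using v by (simp add: vol_SE)
  qed
  show ?thesis using d i1 i2 by linarith
qed



lemma IC_iff:
  "imprecise_copula A B \<longleftrightarrow> grounded A \<and> grounded B \<and> neutral1 A \<and> neutral1 B \<and> icM A B \<and> icO A B"
proof
  assume h: "imprecise_copula A B"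
  have H: "\<And>s1 s2 t1 t2. 0 \<le> s1 \<Longrightarrow> s1 \<le> s2 \<Longrightarrow> s2 \<le> 1 \<Longrightarrow> 0 \<le> t1 \<Longrightarrow> t1 \<le> t2 \<Longrightarrow> t2 \<le> 1 \<Longrightarrow>
      A (s1, t1) + B (s2, t2) - A (s2, t1) - A (s1, t2) \<ge> 0 \<and>
      B (s1, t1) + A (s2, t2) - A (s2, t1) - A (s1, t2) \<ge> 0 \<and>
      B (s1, t1) + B (s2, t2) - B (s2, t1) - A (s1, t2) \<ge> 0 \<and>
      B (s1, t1) + B (s2, t2) - A (s2, t1) - B (s1, t2) \<ge> 0"
    using h unfolding imprecise_copula_def by blast
  have "icM A B" unfolding icM_def
  proof (intro allI impI)
    fix x1 x2 p1 p2 assume r: "I01 x1" "I01 x2" "I01 p1" "I01 p2" and c: "conc x1 x2 p1 p2"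
    show "TT A x1 x2 p1 p2 \<le> B (x1, x2)"
    proof (cases "x1 \<le> p1 \<and> x2 \<le> p2")
      case True
      then show ?thesis using H[of x1 p1 x2 p2] r by (auto simp: TT_def I01_def)
    next
      case False
      then have "p1 \<le> x1 \<and> p2 \<le> x2" using c by (auto simp: conc_def)
      then show ?thesis using H[of p1 x1 p2 x2] r by (auto simp: TT_def I01_def)
    qed
  qed
  moreover have "icO A B" unfolding icO_def
  proof (intro allI impI)
    fix x1 x2 p1 p2 assume r: "I01 x1" "I01 x2" "I01 p1" "I01 p2" and c: "disc x1 x2 p1 p2"
    show "A (x1, x2) \<le> TT B x1 x2 p1 p2"
    proof (cases "x1 \<le> p1 \<and> p2 \<le> x2")
      case True
      then show ?thesis using H[of x1 p1 p2 x2] r by (auto simp: TT_def I01_def)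
    next
      case False
      then have "p1 \<le> x1 \<and> x2 \<le> p2" using c by (auto simp: disc_def)
      then show ?thesis using H[of p1 x1 x2 p2] r by (auto simp: TT_def I01_def)
    qed
  qed
  ultimately show "grounded A \<and> grounded B \<and> neutral1 A \<and> neutral1 B \<and> icM A B \<and> icO A B"
    using h unfolding imprecise_copula_def by blast
next
  assume h: "grounded A \<and> grounded B \<and> neutral1 A \<and> neutral1 B \<and> icM A B \<and> icO A B"
  have M: "\<And>x1 x2 p1 p2. I01 x1 \<Longrightarrow> I01 x2 \<Longrightarrow> I01 p1 \<Longrightarrow> I01 p2 \<Longrightarrow>
      conc x1 x2 p1 p2 \<Longrightarrow> TT A x1 x2 p1 p2 \<le> B (x1, x2)" using h unfolding icM_def by blast
  have O: "\<And>x1 x2 p1 p2. I01 x1 \<Longrightarrow> I01 x2 \<Longrightarrow> I01 p1 \<Longrightarrow> I01 p2 \<Longrightarrow>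
      disc x1 x2 p1 p2 \<Longrightarrow> A (x1, x2) \<le> TT B x1 x2 p1 p2" using h unfolding icO_def by blast
  have "\<forall>s1 s2 t1 t2. 0 \<le> s1 \<and> s1 \<le> s2 \<and> s2 \<le> 1 \<and> 0 \<le> t1 \<and> t1 \<le> t2 \<and> t2 \<le> 1 \<longrightarrow>
      A (s1, t1) + B (s2, t2) - A (s2, t1) - A (s1, t2) \<ge> 0 \<and>
      B (s1, t1) + A (s2, t2) - A (s2, t1) - A (s1, t2) \<ge> 0 \<and>
      B (s1, t1) + B (s2, t2) - B (s2, t1) - A (s1, t2) \<ge> 0 \<and>
      B (s1, t1) + B (s2, t2) - A (s2, t1) - B (s1, t2) \<ge> 0"
  proof (intro allI impI)
    fix s1 s2 t1 t2 :: real assume r: "0 \<le> s1 \<and> s1 \<le> s2 \<and> s2 \<le> 1 \<and> 0 \<le> t1 \<and> t1 \<le> t2 \<and> t2 \<le> 1"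
    have i: "I01 s1" "I01 s2" "I01 t1" "I01 t2" using r by (auto simp: I01_def)
    have 1: "TT A s2 t2 s1 t1 \<le> B (s2, t2)" using M[OF i(2,4,1,3)] r by (auto simp: conc_def)
    have 2: "TT A s1 t1 s2 t2 \<le> B (s1, t1)" using M[OF i(1,3,2,4)] r by (auto simp: conc_def)
    have 3: "A (s1, t2) \<le> TT B s1 t2 s2 t1" using O[OF i(1,4,2,3)] r by (auto simp: disc_def)
    have 4: "A (s2, t1) \<le> TT B s2 t1 s1 t2" using O[OF i(2,3,1,4)] r by (auto simp: disc_def)
    show "A (s1, t1) + B (s2, t2) - A (s2, t1) - A (s1, t2) \<ge> 0 \<and>
      B (s1, t1) + A (s2, t2) - A (s2, t1) - A (s1, t2) \<ge> 0 \<and>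
      B (s1, t1) + B (s2, t2) - B (s2, t1) - A (s1, t2) \<ge> 0 \<and>
      B (s1, t1) + B (s2, t2) - A (s2, t1) - B (s1, t2) \<ge> 0"
      using 1 2 3 4 by (simp add: TT_def)
  qed
  then show "imprecise_copula A B" using h unfolding imprecise_copula_def by blast
qed

lemma ic_var:
  assumes h: "imprecise_copula A B" and s: "I01 s" "I01 s'" "s \<le> s'" and t: "I01 t"
  shows "A (s,t) \<le> A (s',t) \<and> A (s',t) - A (s,t) \<le> s' - s \<and> A (t,s) \<le> A (t,s') \<and> A (t,s') - A (t,s) \<le> s' - s"
    "B (s,t) \<le> B (s',t) \<and> B (s',t) - B (s,t) \<le> s' - s \<and> B (t,s) \<le> B (t,s') \<and> B (t,s') - B (t,s) \<le> s' - s"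
proof -
  have H: "\<And>s1 s2 t1 t2. 0 \<le> s1 \<Longrightarrow> s1 \<le> s2 \<Longrightarrow> s2 \<le> 1 \<Longrightarrow> 0 \<le> t1 \<Longrightarrow> t1 \<le> t2 \<Longrightarrow> t2 \<le> 1 \<Longrightarrow>
      A (s1, t1) + B (s2, t2) - A (s2, t1) - A (s1, t2) \<ge> 0 \<and>
      B (s1, t1) + A (s2, t2) - A (s2, t1) - A (s1, t2) \<ge> 0 \<and>
      B (s1, t1) + B (s2, t2) - B (s2, t1) - A (s1, t2) \<ge> 0 \<and>
      B (s1, t1) + B (s2, t2) - A (s2, t1) - B (s1, t2) \<ge> 0"
    using h unfolding imprecise_copula_def by blast
  have g: "grounded A" "grounded B" "neutral1 A" "neutral1 B" using h unfolding imprecise_copula_def by auto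
  have r: "0 \<le> s" "s \<le> 1" "0 \<le> s'" "s' \<le> 1" "0 \<le> t" "t \<le> 1" using s t by (auto simp: I01_def)
  have ga: "A (s,0) = 0" "A (s',0) = 0" "A (0,s) = 0" "A (0,s') = 0" "A (0,t) = 0" "A (t,0) = 0"
    using g r by (auto simp: grounded_def)
  have gb: "B (s,0) = 0" "B (s',0) = 0" "B (0,s) = 0" "B (0,s') = 0" "B (0,t) = 0" "B (t,0) = 0"
    using g r by (auto simp: grounded_def)
  have na: "A (s,1) = s" "A (s',1) = s'" "A (1,s) = s" "A (1,s') = s'"
    using g r by (auto simp: neutral1_def)
  have nb: "B (s,1) = s" "B (s',1) = s'" "B (1,s) = s" "B (1,s') = s'"
    using g r by (auto simp: neutral1_def)
  have a1: "0 \<le> B (s, 0) + A (s', t) - A (s', 0) - A (s, t)" using H[of s s' 0 t] r s by auto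
  have a2: "0 \<le> A (s, t) + B (s', 1) - A (s', t) - A (s, 1)" using H[of s s' t 1] r s by auto
  have a3: "0 \<le> B (0, s) + A (t, s') - A (t, s) - A (0, s')" using H[of 0 t s s'] r s by auto
  have a4: "0 \<le> A (t, s) + B (1, s') - A (1, s) - A (t, s')" using H[of t 1 s s'] r s by auto
  have b1: "0 \<le> B (s, 0) + B (s', t) - A (s', 0) - B (s, t)" using H[of s s' 0 t] r s by auto
  have b2: "0 \<le> B (s, t) + B (s', 1) - B (s', t) - A (s, 1)" using H[of s s' t 1] r s by auto
  have b3: "0 \<le> B (0, s) + B (t, s') - B (t, s) - A (0, s')" using H[of 0 t s s'] r s by auto
  have b4: "0 \<le> B (t, s) + B (1, s') - A (1, s) - B (t, s')" using H[of t 1 s s'] r s by auto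
  show "A (s,t) \<le> A (s',t) \<and> A (s',t) - A (s,t) \<le> s' - s \<and> A (t,s) \<le> A (t,s') \<and> A (t,s') - A (t,s) \<le> s' - s"
    using a1 a2 a3 a4 ga gb na nb by linarith
  show "B (s,t) \<le> B (s',t) \<and> B (s',t) - B (s,t) \<le> s' - s \<and> B (t,s) \<le> B (t,s') \<and> B (t,s') - B (t,s) \<le> s' - s"
    using b1 b2 b3 b4 ga gb na nb by linarith
qed

lemma lip_gen:
  assumes V: "\<And>s s' t. I01 s \<Longrightarrow> I01 s' \<Longrightarrow> s \<le> s' \<Longrightarrow> I01 t \<Longrightarrow>
     F (s,t) \<le> F (s',t) \<and> F (s',t) - F (s,t) \<le> s' - s \<and> F (t,s) \<le> F (t,s') \<and> F (t,s') - F (t,s) \<le> s' - s"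
  and x: "I01 x1" "I01 x2" and y: "I01 y1" "I01 y2"
  shows "\<bar>F (x1,x2) - F (y1,y2)\<bar> \<le> \<bar>x1 - y1\<bar> + \<bar>x2 - y2\<bar>"
proof -
  have 1: "\<bar>F (x1,x2) - F (y1,x2)\<bar> \<le> \<bar>x1 - y1\<bar>"
  proof (cases "x1 \<le> y1")
    case True then show ?thesis using V[of x1 y1 x2] x y by auto
  next
    case False then show ?thesis using V[of y1 x1 x2] x y by auto
  qed
  have 2: "\<bar>F (y1,x2) - F (y1,y2)\<bar> \<le> \<bar>x2 - y2\<bar>"
  proof (cases "x2 \<le> y2")
    case True then show ?thesis using V[of x2 y2 y1] x y by auto
  next
    case False then show ?thesis using V[of y2 x2 y1] x y by auto
  qed
  show ?thesis using 1 2 by linarith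
qed

lemma ic_lip:
  assumes h: "imprecise_copula A B" and x: "x \<in> unit_sq" and y: "y \<in> unit_sq"
  shows "\<bar>A x - A y\<bar> \<le> \<bar>fst x - fst y\<bar> + \<bar>snd x - snd y\<bar>"
    "\<bar>B x - B y\<bar> \<le> \<bar>fst x - fst y\<bar> + \<bar>snd x - snd y\<bar>"
proof -
  obtain x1 x2 y1 y2 where e: "x = (x1,x2)" "y = (y1,y2)" by (cases x, cases y) auto
  have i: "I01 x1" "I01 x2" "I01 y1" "I01 y2" using x y e by (auto simp: mem_sq)
  show "\<bar>A x - A y\<bar> \<le> \<bar>fst x - fst y\<bar> + \<bar>snd x - snd y\<bar>"
    using lip_gen[of A, OF ic_var(1)[OF h] i] e by simp
  show "\<bar>B x - B y\<bar> \<le> \<bar>fst x - fst y\<bar> + \<bar>snd x - snd y\<bar>"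
    using lip_gen[of B, OF ic_var(2)[OF h] i] e by simp
qed

lemma ic_bnds:
  assumes h: "imprecise_copula A B" and x: "I01 x1" "I01 x2"
  shows "A (x1,x2) \<le> B (x1,x2)" "A (x1,x2) \<le> M_op A (x1,x2)" "M_op A (x1,x2) \<le> B (x1,x2)"
     "A (x1,x2) \<le> O_op B (x1,x2)" "O_op B (x1,x2) \<le> B (x1,x2)"
proof -
  have M: "\<And>p1 p2. I01 p1 \<Longrightarrow> I01 p2 \<Longrightarrow>
      conc x1 x2 p1 p2 \<Longrightarrow> TT A x1 x2 p1 p2 \<le> B (x1, x2)" using h x unfolding IC_iff icM_def by blast
  have O: "\<And>p1 p2. I01 p1 \<Longrightarrow> I01 p2 \<Longrightarrow>
      disc x1 x2 p1 p2 \<Longrightarrow> A (x1, x2) \<le> TT B x1 x2 p1 p2" using h x unfolding IC_iff icO_def by blast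
  have cx: "conc x1 x2 x1 x2" "disc x1 x2 x1 x2" by (auto simp: conc_def disc_def)
  have tt: "TT F x1 x2 x1 x2 = F (x1,x2)" for F by (simp add: TT_def)
  show "A (x1,x2) \<le> B (x1,x2)" using M[OF x cx(1)] tt by simp
  show "A (x1,x2) \<le> M_op A (x1,x2)" using M1[OF x x cx(1) M] tt by simp
  show "M_op A (x1,x2) \<le> B (x1,x2)" using M2[OF x M] by blast
  show "A (x1,x2) \<le> O_op B (x1,x2)" using O2[OF x O] by blast
  show "O_op B (x1,x2) \<le> B (x1,x2)" using O1[OF x x cx(2) O] tt by simp
qed

lemma comb_X:
  assumes "disc x1 x2 y1 y2" "conc y1 y2 u v"
  shows "(conc x1 y2 u x2 \<and> conc y1 x2 u v) \<or> (conc y1 x2 x1 v \<and> conc x1 y2 u v)"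
  using assms unfolding conc_def disc_def by linarith

lemma comb_Y:
  assumes "conc x1 x2 y1 y2" "disc y1 y2 u v"
  shows "(disc x1 y2 u x2 \<and> disc y1 x2 u v) \<or> (disc y1 x2 x1 v \<and> disc x1 y2 u v)"
  using assms unfolding conc_def disc_def by linarith



lemma squeeze_gn:
  assumes h: "imprecise_copula A B"
  and lo: "\<And>x1 x2. I01 x1 \<Longrightarrow> I01 x2 \<Longrightarrow> A (x1,x2) \<le> C (x1,x2)"
  and up: "\<And>x1 x2. I01 x1 \<Longrightarrow> I01 x2 \<Longrightarrow> C (x1,x2) \<le> B (x1,x2)"
  shows "grounded C" "neutral1 C"
proof -
  have g: "grounded A" "grounded B" "neutral1 A" "neutral1 B" using h unfolding imprecise_copula_def by auto
  have z: "I01 0" "I01 1" by (auto simp: I01_def)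
  show "grounded C" unfolding grounded_def
  proof (intro conjI ballI)
    fix x :: real assume "x \<in> {0..1}" then have x: "I01 x" by (auto simp: I01_def)
    show "C (x,0) = 0" using lo[OF x z(1)] up[OF x z(1)] g x by (auto simp: grounded_def I01_def)
    show "C (0,x) = 0" using lo[OF z(1) x] up[OF z(1) x] g x by (auto simp: grounded_def I01_def)
  qed
  show "neutral1 C" unfolding neutral1_def
  proof (intro conjI ballI)
    fix x :: real assume "x \<in> {0..1}" then have x: "I01 x" by (auto simp: I01_def)
    show "C (x,1) = x" using lo[OF x z(2)] up[OF x z(2)] g x by (auto simp: neutral1_def I01_def)
    show "C (1,x) = x" using lo[OF z(2) x] up[OF z(2) x] g x by (auto simp: neutral1_def I01_def)
  qed
qed

lemma lemma_X:
  assumes h: "imprecise_copula A B"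
  shows "imprecise_copula A (M_op A)"
proof -
  let ?C = "M_op A"
  have MA: "\<And>x1 x2 p1 p2. I01 x1 \<Longrightarrow> I01 x2 \<Longrightarrow> I01 p1 \<Longrightarrow> I01 p2 \<Longrightarrow>
      conc x1 x2 p1 p2 \<Longrightarrow> TT A x1 x2 p1 p2 \<le> B (x1, x2)" using h unfolding IC_iff icM_def by blast
  have Clow: "\<And>x1 x2 p1 p2. I01 x1 \<Longrightarrow> I01 x2 \<Longrightarrow> I01 p1 \<Longrightarrow> I01 p2 \<Longrightarrow>
      conc x1 x2 p1 p2 \<Longrightarrow> TT A x1 x2 p1 p2 \<le> ?C (x1, x2)"
  proof -
    fix x1 x2 p1 p2 assume a: "I01 x1" "I01 x2" "I01 p1" "I01 p2" "conc x1 x2 p1 p2"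
    show "TT A x1 x2 p1 p2 \<le> ?C (x1, x2)" by (rule M1[OF a MA[OF a(1,2)]])
  qed
  have gn: "grounded ?C" "neutral1 ?C"
    using squeeze_gn[OF h, of ?C] ic_bnds[OF h] by auto
  have g: "grounded A" "neutral1 A" using h unfolding imprecise_copula_def by auto
  have "icM A ?C" unfolding icM_def using Clow by blast
  moreover have "icO A ?C" unfolding icO_def
  proof (intro allI impI)
    fix x1 x2 y1 y2 assume x: "I01 x1" "I01 x2" and y: "I01 y1" "I01 y2" and d: "disc x1 x2 y1 y2"
    have "?C (y1,y2) \<le> ?C (y1,x2) + ?C (x1,y2) - A (x1,x2)"
    proof (rule M2[OF y])
      fix u v assume q: "I01 u" "I01 v" and c: "conc y1 y2 u v"
      have id1: "TT A y1 y2 u v = TT A x1 y2 u x2 + TT A y1 x2 u v - A (x1,x2)" by (simp add: TT_def)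
      have id2: "TT A y1 y2 u v = TT A y1 x2 x1 v + TT A x1 y2 u v - A (x1,x2)" by (simp add: TT_def)
      from comb_X[OF d c] show "TT A y1 y2 u v \<le> ?C (y1,x2) + ?C (x1,y2) - A (x1,x2)"
      proof
        assume "conc x1 y2 u x2 \<and> conc y1 x2 u v"
        then show ?thesis using Clow[OF x(1) y(2) q(1) x(2)] Clow[OF y(1) x(2) q] id1 by auto
      next
        assume "conc y1 x2 x1 v \<and> conc x1 y2 u v"
        then show ?thesis using Clow[OF y(1) x(2) x(1) q(2)] Clow[OF x(1) y(2) q] id2 by auto
      qed
    qed
    then show "A (x1, x2) \<le> TT ?C x1 x2 y1 y2" by (simp add: TT_def)
  qed
  ultimately show ?thesis using h gn unfolding IC_iff by blast
qed

lemma lemma_Y: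
  assumes h: "imprecise_copula A B"
  shows "imprecise_copula (O_op B) B"
proof -
  let ?D = "O_op B"
  have OA: "\<And>x1 x2 p1 p2. I01 x1 \<Longrightarrow> I01 x2 \<Longrightarrow> I01 p1 \<Longrightarrow> I01 p2 \<Longrightarrow>
      disc x1 x2 p1 p2 \<Longrightarrow> A (x1, x2) \<le> TT B x1 x2 p1 p2" using h unfolding IC_iff icO_def by blast
  have Dup: "\<And>x1 x2 p1 p2. I01 x1 \<Longrightarrow> I01 x2 \<Longrightarrow> I01 p1 \<Longrightarrow> I01 p2 \<Longrightarrow>
      disc x1 x2 p1 p2 \<Longrightarrow> ?D (x1, x2) \<le> TT B x1 x2 p1 p2"
  proof -
    fix x1 x2 p1 p2 assume a: "I01 x1" "I01 x2" "I01 p1" "I01 p2" "disc x1 x2 p1 p2"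
    show "?D (x1, x2) \<le> TT B x1 x2 p1 p2" by (rule O1[OF a OA[OF a(1,2)]])
  qed
  have gn: "grounded ?D" "neutral1 ?D"
    using squeeze_gn[OF h, of ?D] ic_bnds[OF h] by auto
  have g: "grounded B" "neutral1 B" using h unfolding imprecise_copula_def by auto
  have "icO ?D B" unfolding icO_def using Dup by blast
  moreover have "icM ?D B" unfolding icM_def
  proof (intro allI impI)
    fix x1 x2 y1 y2 assume x: "I01 x1" "I01 x2" and y: "I01 y1" "I01 y2" and d: "conc x1 x2 y1 y2"
    have "?D (y1,x2) + ?D (x1,y2) - B (x1,x2) \<le> ?D (y1,y2)"
    proof (rule O2[OF y])
      fix u v assume q: "I01 u" "I01 v" and c: "disc y1 y2 u v"
      have id1: "TT B y1 y2 u v = TT B x1 y2 u x2 + TT B y1 x2 u v - B (x1,x2)" by (simp add: TT_def)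
      have id2: "TT B y1 y2 u v = TT B y1 x2 x1 v + TT B x1 y2 u v - B (x1,x2)" by (simp add: TT_def)
      from comb_Y[OF d c] show "?D (y1,x2) + ?D (x1,y2) - B (x1,x2) \<le> TT B y1 y2 u v"
      proof
        assume "disc x1 y2 u x2 \<and> disc y1 x2 u v"
        then show ?thesis using Dup[OF x(1) y(2) q(1) x(2)] Dup[OF y(1) x(2) q] id1 by auto
      next
        assume "disc y1 x2 x1 v \<and> disc x1 y2 u v"
        then show ?thesis using Dup[OF y(1) x(2) x(1) q(2)] Dup[OF x(1) y(2) q] id2 by auto
      qed
    qed
    then show "TT ?D x1 x2 y1 y2 \<le> B (x1, x2)" by (simp add: TT_def)
  qed
  ultimately show ?thesis using h gn unfolding IC_iff by blast
qed



lemma unif: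
  fixes f :: "nat \<Rightarrow> sqfun" and g :: sqfun
  assumes lip: "\<And>n x y. x\<in>unit_sq \<Longrightarrow> y\<in>unit_sq \<Longrightarrow> \<bar>f n x - f n y\<bar> \<le> \<bar>fst x - fst y\<bar> + \<bar>snd x - snd y\<bar>"
  and lipg: "\<And>x y. x\<in>unit_sq \<Longrightarrow> y\<in>unit_sq \<Longrightarrow> \<bar>g x - g y\<bar> \<le> \<bar>fst x - fst y\<bar> + \<bar>snd x - snd y\<bar>"
  and conv: "\<And>x. x\<in>unit_sq \<Longrightarrow> (\<lambda>n. f n x) \<longlonglongrightarrow> g x"
  shows "uniform_limit unit_sq f g sequentially"
proof (rule uniform_limitI)
  fix e :: real assume e: "0 < e"
  obtain k :: nat where k: "8 / e < real k" using reals_Archimedean2 by blast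
  have kpos: "0 < real k" using k e by (smt (verit) divide_pos_pos)
  have ke: "4 / real k < e / 2" using k e kpos by (simp add: field_simps)
  define G where "G = (\<lambda>(i,j). (real i / real k, real j / real k)) ` ({0..k} \<times> {0..k})"
  have fG: "finite G" unfolding G_def by simp
  have GS: "G \<subseteq> unit_sq" unfolding G_def unit_sq_def using kpos by (auto simp: field_simps)
  have "\<forall>pt\<in>G. eventually (\<lambda>n. dist (f n pt) (g pt) < e/4) sequentially"
  proof
    fix pt assume "pt \<in> G"
    then have "(\<lambda>n. f n pt) \<longlonglongrightarrow> g pt" using conv GS by blast
    then show "eventually (\<lambda>n. dist (f n pt) (g pt) < e/4) sequentially"
      using e unfolding tendsto_iff by (metis divide_pos_pos zero_less_numeral)
  qed
  then have ev: "eventually (\<lambda>n. \<forall>pt\<in>G. dist (f n pt) (g pt) < e/4) sequentially"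
    by (rule eventually_ball_finite[OF fG])
  show "eventually (\<lambda>n. \<forall>x\<in>unit_sq. dist (f n x) (g x) < e) sequentially"
  proof (rule eventually_mono[OF ev])
    fix n assume H: "\<forall>pt\<in>G. dist (f n pt) (g pt) < e/4"
    show "\<forall>x\<in>unit_sq. dist (f n x) (g x) < e"
    proof
      fix x assume x: "x \<in> unit_sq"
      obtain x1 x2 where xe: "x = (x1,x2)" by (cases x)
      have r: "0 \<le> x1" "x1 \<le> 1" "0 \<le> x2" "x2 \<le> 1" using x xe by (auto simp: unit_sq_def)
      have near: "\<exists>i::nat. i \<le> k \<and> \<bar>y - real i / real k\<bar> \<le> 1 / real k" if y: "0 \<le> y" "y \<le> 1" for y
      proof -
        define i where "i = nat \<lfloor>y * real k\<rfloor>"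
        have y0: "0 \<le> y * real k" using y kpos by simp
        have ri: "real i = of_int \<lfloor>y * real k\<rfloor>" unfolding i_def using y0 by simp
        have i1: "real i \<le> y * real k" "y * real k < real i + 1" unfolding ri by linarith+
        have "y * real k \<le> real k" using y kpos by simp
        then have "i \<le> k" using i1 by linarith
        moreover have "\<bar>y - real i / real k\<bar> \<le> 1 / real k"
        proof -
          have "y - real i / real k = (y * real k - real i) / real k" using kpos by (simp add: field_simps)
          moreover have "0 \<le> (y * real k - real i) / real k" using i1 kpos by simp
          moreover have "(y * real k - real i) / real k \<le> 1 / real k"
            using i1 kpos by (intro divide_right_mono) auto
          ultimately show ?thesis by simp
        qed
        ultimately show ?thesis by blast
      qed
      obtain i where i: "i \<le> k" "\<bar>x1 - real i / real k\<bar> \<le> 1 / real k" using near[OF r(1,2)] by blast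
      obtain j where j: "j \<le> k" "\<bar>x2 - real j / real k\<bar> \<le> 1 / real k" using near[OF r(3,4)] by blast
      define pt where "pt = (real i / real k, real j / real k)"
      have ptG: "pt \<in> G" unfolding G_def pt_def using i j by force
      have pts: "pt \<in> unit_sq" using ptG GS by blast
      have "\<bar>f n x - f n pt\<bar> \<le> \<bar>x1 - real i / real k\<bar> + \<bar>x2 - real j / real k\<bar>" using lip[OF x pts, of n] xe pt_def by simp
      have kk: "1 / real k + 1 / real k = 2 / real k" by simp
      have 1: "\<bar>f n x - f n pt\<bar> \<le> 2 / real k" using i j kk `\<bar>f n x - f n pt\<bar> \<le> _` by linarith

      have "\<bar>g x - g pt\<bar> \<le> \<bar>x1 - real i / real k\<bar> + \<bar>x2 - real j / real k\<bar>" using lipg[OF x pts] xe pt_def by simp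
      have 2: "\<bar>g x - g pt\<bar> \<le> 2 / real k" using i j kk `\<bar>g x - g pt\<bar> \<le> _` by linarith

      have 3: "\<bar>f n pt - g pt\<bar> < e/4" using H ptG by (simp add: dist_real_def)
      show "dist (f n x) (g x) < e" using 1 2 3 ke e unfolding dist_real_def by linarith
    qed
  qed
qed

lemma lim4:
  fixes a b c d :: "nat \<Rightarrow> real"
  assumes "a \<longlonglongrightarrow> a'" "b \<longlonglongrightarrow> b'" "c \<longlonglongrightarrow> c'" "d \<longlonglongrightarrow> d'"
    and "\<And>n. 0 \<le> a n + b n - c n - d n"
  shows "0 \<le> a' + b' - c' - d'"
proof (rule LIMSEQ_le_const)
  show "(\<lambda>n. a n + b n - c n - d n) \<longlonglongrightarrow> a' + b' - c' - d'"
    by (intro tendsto_intros assms)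
  show "\<exists>N. \<forall>n\<ge>N. 0 \<le> a n + b n - c n - d n" using assms(5) by blast
qed

lemma seq_simps:
  "seqA A B 0 = A" "seqB A B 0 = B"
  "seqB A B (Suc n) = M_op (seqA A B n)" "seqA A B (Suc n) = O_op (seqB A B (Suc n))"
  by (simp_all add: seqA_def seqB_def Let_def)



theorem mainTheorem9:
  fixes A B :: sqfun
  assumes "imprecise_copula A B"
  shows "(\<forall>n. \<forall>x\<in>unit_sq. seqA A B n x \<le> seqA A B (Suc n) x \<and>
                           seqB A B (Suc n) x \<le> seqB A B n x)
    \<and> (\<forall>n\<ge>1. imprecise_copula (seqA A B n) (seqB A B n) \<and>
          (\<forall>x\<in>unit_sq. seqA A B (n - 1) x \<le> seqA A B n x \<and> seqA A B n x \<le> seqB A B n x \<and>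
                         seqB A B n x \<le> seqB A B (n - 1) x))
    \<and> (\<exists>Ab Bb :: sqfun.
          uniform_limit unit_sq (seqA A B) Ab sequentially \<and>
          uniform_limit unit_sq (seqB A B) Bb sequentially \<and>
          imprecise_copula Ab Bb \<and>
          (\<forall>n. \<forall>x\<in>unit_sq. seqA A B n x \<le> Ab x \<and> Ab x \<le> Bb x \<and> Bb x \<le> seqB A B n x) \<and>
          (\<forall>x\<in>unit_sq. M_op Ab x = Bb x \<and> O_op Bb x = Ab x))"
proof -
  note h = assms
  let ?a = "seqA A B" and ?b = "seqB A B"
  have IC: "imprecise_copula (?a n) (?b n)" for n
  proof (induction n)
    case 0 then show ?case using h by (simp add: seq_simps)
  next
    case (Suc n) then show ?case using lemma_Y[OF lemma_X[OF Suc]] by (simp add: seq_simps)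
  qed
  have ICX: "imprecise_copula (?a n) (?b (Suc n))" for n
    using lemma_X[OF IC[of n]] by (simp add: seq_simps)
  have step: "?a n x \<le> ?a (Suc n) x \<and> ?b (Suc n) x \<le> ?b n x \<and> ?a n x \<le> ?b n x"
    if x: "x \<in> unit_sq" for n x
  proof -
    obtain x1 x2 where xe: "x = (x1,x2)" by (cases x)
    have i: "I01 x1" "I01 x2" using x xe by (auto simp: mem_sq)
    show ?thesis using ic_bnds(3)[OF IC[of n] i] ic_bnds(4)[OF ICX[of n] i] ic_bnds(1)[OF IC[of n] i] xe
      by (simp add: seq_simps)
  qed
  have P1: "\<forall>n. \<forall>x\<in>unit_sq. ?a n x \<le> ?a (Suc n) x \<and> ?b (Suc n) x \<le> ?b n x"
    using step by blast
  have P2: "\<forall>n\<ge>1. imprecise_copula (?a n) (?b n) \<and>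
          (\<forall>x\<in>unit_sq. ?a (n - 1) x \<le> ?a n x \<and> ?a n x \<le> ?b n x \<and> ?b n x \<le> ?b (n - 1) x)"
  proof (intro allI impI conjI)
    fix n :: nat assume n: "1 \<le> n"
    obtain m where m: "n = Suc m" using n by (cases n) auto
    show "imprecise_copula (?a n) (?b n)" by (rule IC)
    show "\<forall>x\<in>unit_sq. ?a (n - 1) x \<le> ?a n x \<and> ?a n x \<le> ?b n x \<and> ?b n x \<le> ?b (n - 1) x"
      using step m by auto
  qed
  have incA: "incseq (\<lambda>n. ?a n x)" if x: "x \<in> unit_sq" for x
    using step[OF x] by (auto intro: incseq_SucI)
  have decB: "decseq (\<lambda>n. ?b n x)" if x: "x \<in> unit_sq" for x
    using step[OF x] by (auto intro: decseq_SucI)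
  define Ab where "Ab x = lim (\<lambda>n. ?a n x)" for x
  define Bb where "Bb x = lim (\<lambda>n. ?b n x)" for x
  have LA: "(\<lambda>n. ?a n x) \<longlonglongrightarrow> Ab x \<and> (\<forall>n. ?a n x \<le> Ab x)" if x: "x \<in> unit_sq" for x
  proof -
    have "\<forall>i. ?a i x \<le> ?b 0 x"
      using step[OF x] decseqD[OF decB[OF x]] by (meson order_trans zero_le)
    then obtain L where L: "(\<lambda>n. ?a n x) \<longlonglongrightarrow> L" "\<forall>i. ?a i x \<le> L"
      using incseq_convergent[OF incA[OF x]] by blast
    have "Ab x = L" unfolding Ab_def using L(1) by (rule limI)
    then show ?thesis using L by simp
  qed
  have LB: "(\<lambda>n. ?b n x) \<longlonglongrightarrow> Bb x \<and> (\<forall>n. Bb x \<le> ?b n x)" if x: "x \<in> unit_sq" for x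
  proof -
    have "\<forall>i. ?a 0 x \<le> ?b i x"
      using step[OF x] incseqD[OF incA[OF x]] by (meson order_trans zero_le)
    then obtain L where L: "(\<lambda>n. ?b n x) \<longlonglongrightarrow> L" "\<forall>i. L \<le> ?b i x"
      using decseq_convergent[OF decB[OF x]] by blast
    have "Bb x = L" unfolding Bb_def using L(1) by (rule limI)
    then show ?thesis using L by simp
  qed
  have AB: "Ab x \<le> Bb x" if x: "x \<in> unit_sq" for x
    using LIMSEQ_le[OF conjunct1[OF LA[OF x]] conjunct1[OF LB[OF x]]] step[OF x] by blast
  have cA: "Ab x = c" if x: "x \<in> unit_sq" and c: "\<And>n. ?a n x = c" for x c
  proof -
    have "(\<lambda>n. ?a n x) = (\<lambda>n. c)" using c by simp
    then show ?thesis using LA[OF x] LIMSEQ_unique tendsto_const by metis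
  qed
  have cB: "Bb x = c" if x: "x \<in> unit_sq" and c: "\<And>n. ?b n x = c" for x c
  proof -
    have "(\<lambda>n. ?b n x) = (\<lambda>n. c)" using c by simp
    then show ?thesis using LB[OF x] LIMSEQ_unique tendsto_const by metis
  qed
  have gnAll: "grounded (?a n) \<and> grounded (?b n) \<and> neutral1 (?a n) \<and> neutral1 (?b n)" for n
    using IC[of n] unfolding imprecise_copula_def by blast
  have ICb: "imprecise_copula Ab Bb"
    unfolding imprecise_copula_def
  proof (intro conjI)
    show "grounded Ab" unfolding grounded_def
      using gnAll cA by (auto simp: grounded_def unit_sq_def)
    show "grounded Bb" unfolding grounded_def
      using gnAll cB by (auto simp: grounded_def unit_sq_def)
    show "neutral1 Ab" unfolding neutral1_def
      using gnAll cA by (auto simp: neutral1_def unit_sq_def)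
    show "neutral1 Bb" unfolding neutral1_def
      using gnAll cB by (auto simp: neutral1_def unit_sq_def)
    show "\<forall>s1 s2 t1 t2. 0 \<le> s1 \<and> s1 \<le> s2 \<and> s2 \<le> 1 \<and> 0 \<le> t1 \<and> t1 \<le> t2 \<and> t2 \<le> 1 \<longrightarrow>
      Ab (s1, t1) + Bb (s2, t2) - Ab (s2, t1) - Ab (s1, t2) \<ge> 0 \<and>
      Bb (s1, t1) + Ab (s2, t2) - Ab (s2, t1) - Ab (s1, t2) \<ge> 0 \<and>
      Bb (s1, t1) + Bb (s2, t2) - Bb (s2, t1) - Ab (s1, t2) \<ge> 0 \<and>
      Bb (s1, t1) + Bb (s2, t2) - Ab (s2, t1) - Bb (s1, t2) \<ge> 0"
    proof (intro allI impI)
      fix s1 s2 t1 t2 :: real assume r: "0 \<le> s1 \<and> s1 \<le> s2 \<and> s2 \<le> 1 \<and> 0 \<le> t1 \<and> t1 \<le> t2 \<and> t2 \<le> 1"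
      have m: "(s1,t1) \<in> unit_sq" "(s2,t2) \<in> unit_sq" "(s2,t1) \<in> unit_sq" "(s1,t2) \<in> unit_sq"
        using r by (auto simp: unit_sq_def)
      have H: "\<And>n. ?a n (s1, t1) + ?b n (s2, t2) - ?a n (s2, t1) - ?a n (s1, t2) \<ge> 0 \<and>
        ?b n (s1, t1) + ?a n (s2, t2) - ?a n (s2, t1) - ?a n (s1, t2) \<ge> 0 \<and>
        ?b n (s1, t1) + ?b n (s2, t2) - ?b n (s2, t1) - ?a n (s1, t2) \<ge> 0 \<and>
        ?b n (s1, t1) + ?b n (s2, t2) - ?a n (s2, t1) - ?b n (s1, t2) \<ge> 0"
        using IC r unfolding imprecise_copula_def by blast
      note la = conjunct1[OF LA[OF m(1)]] conjunct1[OF LA[OF m(2)]] conjunct1[OF LA[OF m(3)]] conjunct1[OF LA[OF m(4)]]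
      note lb = conjunct1[OF LB[OF m(1)]] conjunct1[OF LB[OF m(2)]] conjunct1[OF LB[OF m(3)]] conjunct1[OF LB[OF m(4)]]
      show "Ab (s1, t1) + Bb (s2, t2) - Ab (s2, t1) - Ab (s1, t2) \<ge> 0 \<and>
      Bb (s1, t1) + Ab (s2, t2) - Ab (s2, t1) - Ab (s1, t2) \<ge> 0 \<and>
      Bb (s1, t1) + Bb (s2, t2) - Bb (s2, t1) - Ab (s1, t2) \<ge> 0 \<and>
      Bb (s1, t1) + Bb (s2, t2) - Ab (s2, t1) - Bb (s1, t2) \<ge> 0"
      proof (intro conjI)
        show "Ab (s1, t1) + Bb (s2, t2) - Ab (s2, t1) - Ab (s1, t2) \<ge> 0"
          by (rule lim4[OF la(1) lb(2) la(3) la(4)]) (use H in blast)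
        show "Bb (s1, t1) + Ab (s2, t2) - Ab (s2, t1) - Ab (s1, t2) \<ge> 0"
          by (rule lim4[OF lb(1) la(2) la(3) la(4)]) (use H in blast)
        show "Bb (s1, t1) + Bb (s2, t2) - Bb (s2, t1) - Ab (s1, t2) \<ge> 0"
          by (rule lim4[OF lb(1) lb(2) lb(3) la(4)]) (use H in blast)
        show "Bb (s1, t1) + Bb (s2, t2) - Ab (s2, t1) - Bb (s1, t2) \<ge> 0"
          by (rule lim4[OF lb(1) lb(2) la(3) lb(4)]) (use H in blast)
      qed
    qed
  qed
  have UA: "uniform_limit unit_sq ?a Ab sequentially"
    by (rule unif) (auto intro: ic_lip(1)[OF IC] ic_lip(1)[OF ICb] simp: LA)
  have UB: "uniform_limit unit_sq ?b Bb sequentially"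
    by (rule unif) (auto intro: ic_lip(2)[OF IC] ic_lip(2)[OF ICb] simp: LB)
  have bnds: "\<forall>n. \<forall>x\<in>unit_sq. ?a n x \<le> Ab x \<and> Ab x \<le> Bb x \<and> Bb x \<le> ?b n x"
    using LA LB AB by blast
  have MAb: "\<And>x1 x2 p1 p2. I01 x1 \<Longrightarrow> I01 x2 \<Longrightarrow> I01 p1 \<Longrightarrow> I01 p2 \<Longrightarrow>
      conc x1 x2 p1 p2 \<Longrightarrow> TT Ab x1 x2 p1 p2 \<le> Bb (x1, x2)" using ICb unfolding IC_iff icM_def by blast
  have OAb: "\<And>x1 x2 p1 p2. I01 x1 \<Longrightarrow> I01 x2 \<Longrightarrow> I01 p1 \<Longrightarrow> I01 p2 \<Longrightarrow>
      disc x1 x2 p1 p2 \<Longrightarrow> Ab (x1, x2) \<le> TT Bb x1 x2 p1 p2" using ICb unfolding IC_iff icO_def by blast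
  have TTclose: "\<bar>TT F x1 x2 u v - TT G x1 x2 u v\<bar> < e"
    if "I01 x1" "I01 x2" "I01 u" "I01 v" "\<forall>y\<in>unit_sq. dist (F y) (G y) < e/3" for F G x1 x2 u v e
  proof -
    have "(u,x2) \<in> unit_sq" "(x1,v) \<in> unit_sq" "(u,v) \<in> unit_sq" using that by (auto simp: mem_sq)
    then have "\<bar>F (u,x2) - G (u,x2)\<bar> < e/3" "\<bar>F (x1,v) - G (x1,v)\<bar> < e/3" "\<bar>F (u,v) - G (u,v)\<bar> < e/3"
      using that(5) by (auto simp: dist_real_def)
    then show ?thesis unfolding TT_def by linarith
  qed
  have FP: "M_op Ab x = Bb x \<and> O_op Bb x = Ab x" if x: "x \<in> unit_sq" for x
  proof -
    obtain x1 x2 where xe: "x = (x1,x2)" by (cases x)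
    have i: "I01 x1" "I01 x2" using x xe by (auto simp: mem_sq)
    have 1: "M_op Ab (x1,x2) \<le> Bb (x1,x2)" by (rule ic_bnds(3)[OF ICb i])
    have 2: "Ab (x1,x2) \<le> O_op Bb (x1,x2)" by (rule ic_bnds(4)[OF ICb i])
    have 3: "Bb (x1,x2) \<le> M_op Ab (x1,x2)"
    proof (rule field_le_epsilon)
      fix e :: real assume e: "0 < e"
      have "eventually (\<lambda>n. \<forall>y\<in>unit_sq. dist (?a n y) (Ab y) < e/3) sequentially"
        using uniform_limitD[OF UA, of "e/3"] e by simp
      then obtain N where N: "\<forall>y\<in>unit_sq. dist (?a N y) (Ab y) < e/3"
        unfolding eventually_sequentially by blast
      have "M_op (?a N) (x1,x2) \<le> M_op Ab (x1,x2) + e"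
      proof (rule M2[OF i])
        fix u v assume q: "I01 u" "I01 v" and c: "conc x1 x2 u v"
        have "TT Ab x1 x2 u v \<le> M_op Ab (x1,x2)" by (rule M1[OF i q c MAb[OF i]])
        then show "TT (?a N) x1 x2 u v \<le> M_op Ab (x1,x2) + e"
          using TTclose[OF i q N] by linarith
      qed
      moreover have "Bb (x1,x2) \<le> ?b (Suc N) (x1,x2)" using bnds x xe by blast
      ultimately show "Bb (x1,x2) \<le> M_op Ab (x1,x2) + e" by (simp add: seq_simps)
    qed
    have 4: "O_op Bb (x1,x2) \<le> Ab (x1,x2)"
    proof (rule field_le_epsilon)
      fix e :: real assume e: "0 < e"
      have "eventually (\<lambda>n. \<forall>y\<in>unit_sq. dist (?b n y) (Bb y) < e/3) sequentially"
        using uniform_limitD[OF UB, of "e/3"] e by simp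
      then obtain N where N: "\<forall>y\<in>unit_sq. dist (?b (Suc N) y) (Bb y) < e/3"
        unfolding eventually_sequentially by (meson le_SucI order_refl)
      have "O_op Bb (x1,x2) - e \<le> O_op (?b (Suc N)) (x1,x2)"
      proof (rule O2[OF i])
        fix u v assume q: "I01 u" "I01 v" and c: "disc x1 x2 u v"
        have "O_op Bb (x1,x2) \<le> TT Bb x1 x2 u v" by (rule O1[OF i q c OAb[OF i]])
        then show "O_op Bb (x1,x2) - e \<le> TT (?b (Suc N)) x1 x2 u v"
          using TTclose[OF i q N] by linarith
      qed
      moreover have "?a (Suc N) (x1,x2) \<le> Ab (x1,x2)" using bnds x xe by blast
      ultimately show "O_op Bb (x1,x2) \<le> Ab (x1,x2) + e" by (simp add: seq_simps)
    qed
    show ?thesis using 1 2 3 4 xe by simp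
  qed
  show ?thesis using P1 P2 UA UB ICb bnds FP by blast
qed

end
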